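(* Let $G$ be a finite simple graph and let $k\ge 1$ and $c\ge 2$ be integers. For any positive integer $r$, if $G$ has a weak $kr$-guidance system of maximum outdegree at most $c$, then the $k$-distance power $G^k$ has a weak $r$-guidance system of maximum outdegree at most $2c^k$.
   Context: All graphs are finite, simple and undirected. An orientation of $G$ is a directed graph $\vec{H}$ on $V(G)$ such that every $(u,v)\in E(\vec{H})$ satisfies $uv\in E(G)$, and for every $uv\in E(G)$ at least one of $(u,v),(v,u)$ lies in $E(\vec{H})$ (both are allowed). A partial orientation of $G$ is a spanning directed subgraph of an orientation of $G$ (so each edge may be directed in neither, one, or both directions). For a partial orientation $\vec{H}$, $B_{\vec{H}}(v,a)$ denotes the set of vertices reachable from $v$ by a directed path in $\vec{H}$ of length at most $a$. A weak $r$-guidance system of $G$ is a partial orientation $\vec{H}$ of $G$ such that for any distinct vertices $u,v$ at distance $\ell\le r$ in $G$ there exist non-negative integers $a,b$ with $a+b=\ell-1$ such that $G$ contains an edge between $B_{\vec{H}}(u,a)$ and $B_{\vec{H}}(v,b)$. The $k$-distance power $G^k$ is the graph on $V(G)$ in which two distinct vertices are adjacent iff their distance in $G$ is at most $k$. *)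

theory Defs
  imports Main
begin

definition simple_graph :: "'a set \<Rightarrow> ('a \<Rightarrow> 'a \<Rightarrow> bool) \<Rightarrow> bool" where
  "simple_graph V E \<longleftrightarrow> finite V \<and> (\<forall>u v. E u v \<longrightarrow> u \<in> V \<and> v \<in> V)
     \<and> (\<forall>u v. E u v \<longrightarrow> E v u) \<and> (\<forall>u. \<not> E u u)"

definition has_dist :: "('a \<Rightarrow> 'a \<Rightarrow> bool) \<Rightarrow> 'a \<Rightarrow> 'a \<Rightarrow> nat \<Rightarrow> bool" where
  "has_dist E u v l \<longleftrightarrow> (E ^^ l) u v \<and> (\<forall>m<l. \<not> (E ^^ m) u v)"

text \<open>Partial orientation: a set of arcs, each arc along an edge of G
  (an edge may carry no, one or both directions).\<close>
definition partial_orientation :: "('a \<Rightarrow> 'a \<Rightarrow> bool) \<Rightarrow> ('a \<Rightarrow> 'a \<Rightarrow> bool) \<Rightarrow> bool" where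
  "partial_orientation E D \<longleftrightarrow> (\<forall>u v. D u v \<longrightarrow> E u v)"

definition out_ball :: "('a \<Rightarrow> 'a \<Rightarrow> bool) \<Rightarrow> 'a \<Rightarrow> nat \<Rightarrow> 'a set" where
  "out_ball D v a = {w. \<exists>i\<le>a. (D ^^ i) v w}"

definition max_outdeg_le :: "'a set \<Rightarrow> ('a \<Rightarrow> 'a \<Rightarrow> bool) \<Rightarrow> nat \<Rightarrow> bool" where
  "max_outdeg_le V D c \<longleftrightarrow> (\<forall>v\<in>V. card {w. D v w} \<le> c)"

definition weak_guidance ::
  "'a set \<Rightarrow> ('a \<Rightarrow> 'a \<Rightarrow> bool) \<Rightarrow> ('a \<Rightarrow> 'a \<Rightarrow> bool) \<Rightarrow> nat \<Rightarrow> bool" where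
  "weak_guidance V E D r \<longleftrightarrow> partial_orientation E D \<and>
     (\<forall>u\<in>V. \<forall>v\<in>V. \<forall>l. u \<noteq> v \<and> l \<le> r \<and> has_dist E u v l \<longrightarrow>
        (\<exists>a b. a + b = l - 1 \<and>
           (\<exists>x\<in>out_ball D u a. \<exists>y\<in>out_ball D v b. E x y)))"

definition graph_power :: "('a \<Rightarrow> 'a \<Rightarrow> bool) \<Rightarrow> nat \<Rightarrow> 'a \<Rightarrow> 'a \<Rightarrow> bool" where
  "graph_power E k u v \<longleftrightarrow> u \<noteq> v \<and> (\<exists>l\<le>k. (E ^^ l) u v)"

end

theory Submission
  imports Defs
begin

lemma rp_split:
  assumes "(R ^^ (m + n)) u w"
  obtains z where "(R ^^ m) u z" "(R ^^ n) z w"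
  using assms by (auto simp: relpowp_add)

lemma rp_sym:
  assumes "\<And>x y. R x y \<Longrightarrow> R y x"
  shows "(R ^^ n) x y \<Longrightarrow> (R ^^ n) y x"
proof (induction n arbitrary: y)
  case 0
  then show ?case by simp
next
  case (Suc n)
  then obtain z where "(R ^^ n) x z" "R z y" by (auto elim: relpowp_Suc_E)
  then have "(R ^^ n) z x" "R y z" using Suc.IH assms by auto
  then show ?case by (metis relpowp_Suc_I2)
qed

lemma rp_chunk:
  "(R ^^ m) u w \<Longrightarrow> m \<le> k * j \<Longrightarrow> \<exists>t\<le>j. (graph_power R k ^^ t) u w"
proof (induction j arbitrary: u m)
  case 0
  then show ?case by auto
next
  case (Suc j)
  show ?case
  proof (cases "m \<le> k")
    case True
    show ?thesis
    proof (cases "u = w")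
      case True
      then show ?thesis by (intro exI[of _ 0]) auto
    next
      case False
      then have "graph_power R k u w" using Suc.prems \<open>m \<le> k\<close>
        unfolding graph_power_def by auto
      then show ?thesis by (intro exI[of _ 1]) auto
    qed
  next
    case False
    then have m: "m = k + (m - k)" by simp
    then obtain z where z1: "(R ^^ k) u z" and z2: "(R ^^ (m - k)) z w"
      using Suc.prems(1) by (metis rp_split)
    have "m - k \<le> k * j" using Suc.prems(2) by simp
    then obtain t where t: "t \<le> j" "(graph_power R k ^^ t) z w"
      using Suc.IH z2 by blast
    show ?thesis
    proof (cases "u = z")
      case True
      then show ?thesis using t by (intro exI[of _ t]) auto
    next
      case False
      then have "graph_power R k u z" using z1 unfolding graph_power_def by auto
      then have "(graph_power R k ^^ Suc t) u w" using t(2) by (rule relpowp_Suc_I2)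
      then show ?thesis using t(1) by (intro exI[of _ "Suc t"]) auto
    qed
  qed
qed

lemma rp_unchunk:
  "(graph_power R k ^^ j) u w \<Longrightarrow> \<exists>m\<le>k * j. (R ^^ m) u w"
proof (induction j arbitrary: w)
  case 0
  then show ?case by auto
next
  case (Suc j)
  then obtain z where "(graph_power R k ^^ j) u z" "graph_power R k z w"
    by (auto elim: relpowp_Suc_E)
  then obtain m m' where "m \<le> k * j" "(R ^^ m) u z" "m' \<le> k" "(R ^^ m') z w"
    using Suc.IH unfolding graph_power_def by blast
  then have "(R ^^ (m + m')) u w" "m + m' \<le> k * Suc j"
    by (auto intro: relpowp_trans)
  then show ?case by blast
qed

lemma card_pow_set:
  assumes fin: "finite V" and clos: "\<And>x y. D x y \<Longrightarrow> y \<in> V"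
    and deg: "\<And>v. v \<in> V \<Longrightarrow> card {w. D v w} \<le> c" and v: "v \<in> V"
  shows "card {w. (D ^^ i) v w} \<le> c ^ i \<and> {w. (D ^^ i) v w} \<subseteq> V"
proof (induction i)
  case 0
  then show ?case using v by auto
next
  case (Suc i)
  let ?S = "{w. (D ^^ i) v w}"
  have eq: "{w. (D ^^ Suc i) v w} = (\<Union>y\<in>?S. {w. D y w})"
    by (auto elim: relpowp_Suc_E intro: relpowp_Suc_I)
  have finS: "finite ?S" using Suc.IH fin finite_subset by blast
  have "card (\<Union>y\<in>?S. {w. D y w}) \<le> (\<Sum>y\<in>?S. card {w. D y w})"
    using finS by (rule card_UN_le)
  also have "\<dots> \<le> card ?S * c"
    using sum_bounded_above[of ?S "\<lambda>y. card {w. D y w}" c] deg Suc.IH by auto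
  also have "\<dots> \<le> c ^ i * c" using Suc.IH by simp
  finally have "card {w. (D ^^ Suc i) v w} \<le> c ^ Suc i" using eq by (simp add: mult.commute)
  moreover have "{w. (D ^^ Suc i) v w} \<subseteq> V" using eq clos by auto
  ultimately show ?case by blast
qed

lemma geom_bound:
  assumes "(c::nat) \<ge> 2"
  shows "(\<Sum>i\<in>{1..k}. c ^ i) \<le> 2 * c ^ k"
proof (induction k)
  case 0
  then show ?case by simp
next
  case (Suc k)
  have h: "2 * c ^ k \<le> c * c ^ k" using mult_right_mono[OF assms, of "c ^ k"] by simp
  have "(\<Sum>i\<in>{1..Suc k}. c ^ i) = (\<Sum>i\<in>{1..k}. c ^ i) + c * c ^ k" by simp
  moreover have "2 * c ^ Suc k = 2 * (c * c ^ k)" by simp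
  ultimately show ?case using Suc h by linarith
qed

theorem lemma5:
  fixes V :: "'a set" and E D :: "'a \<Rightarrow> 'a \<Rightarrow> bool" and k c r :: nat
  assumes "simple_graph V E" and "k \<ge> 1" and "c \<ge> 2" and "r > 0"
    and "weak_guidance V E D (k * r)" and "max_outdeg_le V D c"
  shows "\<exists>D'. weak_guidance V (graph_power E k) D' r \<and> max_outdeg_le V D' (2 * c ^ k)"
proof (intro exI conjI)
  have finV: "finite V" and Ein: "\<And>u v. E u v \<Longrightarrow> u \<in> V \<and> v \<in> V"
    and Esym: "\<And>u v. E u v \<Longrightarrow> E v u"
    using assms(1) unfolding simple_graph_def by auto
  have DE: "\<And>u v. D u v \<Longrightarrow> E u v"
    using assms(5) unfolding weak_guidance_def partial_orientation_def by auto
  have guid: "\<And>u v l. u \<in> V \<Longrightarrow> v \<in> V \<Longrightarrow> u \<noteq> v \<Longrightarrow> l \<le> k * r \<Longrightarrow> has_dist E u v l \<Longrightarrow>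
        (\<exists>a b. a + b = l - 1 \<and> (\<exists>x\<in>out_ball D u a. \<exists>y\<in>out_ball D v b. E x y))"
    using assms(5) unfolding weak_guidance_def by blast
  have DEn: "\<And>n x y. (D ^^ n) x y \<Longrightarrow> (E ^^ n) x y"
    by (erule relpowp_mono[rotated]) (erule DE)
  have Ensym: "\<And>n x y. (E ^^ n) x y \<Longrightarrow> (E ^^ n) y x"
    by (rule rp_sym[OF Esym])
  show "max_outdeg_le V (graph_power D k) (2 * c ^ k)"
    unfolding max_outdeg_le_def
  proof
    fix v assume v: "v \<in> V"
    have cp: "\<And>i. card {w. (D ^^ i) v w} \<le> c ^ i \<and> {w. (D ^^ i) v w} \<subseteq> V"
      by (rule card_pow_set[OF finV _ _ v]) (use DE Ein assms(6) in \<open>auto simp: max_outdeg_le_def\<close>)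
    have sub: "{w. graph_power D k v w} \<subseteq> (\<Union>i\<in>{1..k}. {w. (D ^^ i) v w})"
    proof
      fix w assume "w \<in> {w. graph_power D k v w}"
      then obtain i where "v \<noteq> w" "i \<le> k" "(D ^^ i) v w" unfolding graph_power_def by auto
      moreover then have "i \<noteq> 0" by (cases i) auto
      ultimately show "w \<in> (\<Union>i\<in>{1..k}. {w. (D ^^ i) v w})" by auto
    qed
    have finU: "finite (\<Union>i\<in>{1..k}. {w. (D ^^ i) v w})"
      using cp finV by (meson finite_UN_I finite_atLeastAtMost finite_subset)
    have "card {w. graph_power D k v w} \<le> card (\<Union>i\<in>{1..k}. {w. (D ^^ i) v w})"
      by (rule card_mono[OF finU sub])
    also have "\<dots> \<le> (\<Sum>i\<in>{1..k}. card {w. (D ^^ i) v w})" by (rule card_UN_le) simp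
    also have "\<dots> \<le> (\<Sum>i\<in>{1..k}. c ^ i)" using cp by (intro sum_mono) auto
    also have "\<dots> \<le> 2 * c ^ k" using assms(3) by (rule geom_bound)
    finally show "card {w. graph_power D k v w} \<le> 2 * c ^ k" .
  qed
  show "weak_guidance V (graph_power E k) (graph_power D k) r"
    unfolding weak_guidance_def
  proof (intro conjI ballI allI impI)
    show "partial_orientation (graph_power E k) (graph_power D k)"
      unfolding partial_orientation_def graph_power_def using DEn by blast
  next
    fix u v l
    assume u: "u \<in> V" and v: "v \<in> V" and h: "u \<noteq> v \<and> l \<le> r \<and> has_dist (graph_power E k) u v l"
    then have uv: "u \<noteq> v" and lr: "l \<le> r" and hpl: "(graph_power E k ^^ l) u v"
      and hmin: "\<And>m. m < l \<Longrightarrow> \<not> (graph_power E k ^^ m) u v"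
      unfolding has_dist_def by auto
    have l1: "l \<ge> 1"
    proof (rule ccontr)
      assume "\<not> l \<ge> 1"
      then have "l = 0" by simp
      then have "u = v" using hpl by simp
      then show False using uv by simp
    qed
    obtain m0 where m0: "m0 \<le> k * l" "(E ^^ m0) u v" using rp_unchunk[OF hpl] by blast
    define d where "d = (LEAST m. (E ^^ m) u v)"
    have dpath: "(E ^^ d) u v" unfolding d_def using m0(2) by (rule LeastI)
    have dmin: "\<And>m. m < d \<Longrightarrow> \<not> (E ^^ m) u v" unfolding d_def using not_less_Least by blast
    have "\<not> m0 < d" using dmin m0(2) by blast
    then have dle: "d \<le> k * l" using m0(1) by linarith
    have dgt: "k * (l - 1) < d"
    proof (rule ccontr)
      assume "\<not> k * (l - 1) < d"
      then obtain t where "t \<le> l - 1" "(graph_power E k ^^ t) u v"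
        using rp_chunk[OF dpath] by (meson not_less)
      moreover have "t < l" using \<open>t \<le> l - 1\<close> l1 by linarith
      ultimately show False using hmin by blast
    qed
    have d1: "d \<ge> 1" using dpath uv by (cases d) auto
    have dkr: "d \<le> k * r" using dle lr by (meson le_trans mult_le_mono2)
    have hd: "has_dist E u v d" unfolding has_dist_def using dpath dmin by auto
    obtain a b x y where ab: "a + b = d - 1" and x: "x \<in> out_ball D u a"
      and y: "y \<in> out_ball D v b" and exy: "E x y"
      using guid[OF u v uv dkr hd] by blast
    obtain i where i: "i \<le> a" "(D ^^ i) u x" using x unfolding out_ball_def by auto
    obtain j where j: "j \<le> b" "(D ^^ j) v y" using y unfolding out_ball_def by auto
    have "(E ^^ (Suc i + j)) u v"
    proof -
      have "(E ^^ Suc i) u y" by (rule relpowp_Suc_I[OF DEn[OF i(2)] exy])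
      moreover have "(E ^^ j) y v" by (rule Ensym[OF DEn[OF j(2)]])
      ultimately show ?thesis by (rule relpowp_trans)
    qed
    then have "\<not> Suc i + j < d" using dmin by blast
    then have "d \<le> i + 1 + j" by linarith
    then have ia: "i = a" and jb: "j = b" using ab i(1) j(1) d1 by auto
    define a' where "a' = a div k"
    define b' where "b' = l - 1 - a'"
    define p where "p = k * a'"
    define q where "q = min b (k * b')"
    have kpos: "k > 0" using assms(2) by simp
    have pa: "p \<le> a" unfolding p_def a'_def by (simp add: mult.commute)
    have "a < k * l" using ab d1 dle by linarith
    then have a'l: "a' < l" unfolding a'_def using kpos
      by (simp add: div_less_iff_less_mult mult.commute)
    have qb: "q \<le> b" unfolding q_def by simp
    have qk: "q \<le> k * b'" unfolding q_def by simp
    have ab': "a' + b' = l - 1" unfolding b'_def using a'l by simp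
    have amod: "a - p < k" unfolding p_def a'_def using kpos
      by (metis minus_mult_div_eq_mod mod_less_divisor mult.commute)
    have short: "d - p - q \<le> k"
    proof (cases "q = b")
      case True
      then show ?thesis using amod ab d1 pa by linarith
    next
      case False
      then have "q = k * b'" unfolding q_def by simp
      then have "p + q = k * (l - 1)" unfolding p_def using ab' by (simp flip: add_mult_distrib2)
      moreover have "k * (l - 1) + k = k * l" using l1 by (cases l) auto
      ultimately show ?thesis using dle by linarith
    qed
    obtain x' where x1: "(D ^^ p) u x'" and x2: "(D ^^ (a - p)) x' x"
    proof -
      have "(D ^^ (p + (a - p))) u x" using i(2) ia pa by simp
      then show ?thesis using that by (rule rp_split)
    qed
    obtain y' where y1: "(D ^^ q) v y'" and y2: "(D ^^ (b - q)) y' y"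
    proof -
      have "(D ^^ (q + (b - q))) v y" using j(2) jb qb by simp
      then show ?thesis using that by (rule rp_split)
    qed
    have x'b: "x' \<in> out_ball (graph_power D k) u a'"
      using rp_chunk[OF x1, of k a'] unfolding out_ball_def p_def by auto
    have y'b: "y' \<in> out_ball (graph_power D k) v b'"
      using rp_chunk[OF y1 qk] unfolding out_ball_def by auto
    have w0: "(E ^^ (Suc (a - p) + (b - q))) x' y'"
    proof -
      have "(E ^^ Suc (a - p)) x' y" by (rule relpowp_Suc_I[OF DEn[OF x2] exy])
      moreover have "(E ^^ (b - q)) y y'" by (rule Ensym[OF DEn[OF y2]])
      ultimately show ?thesis by (rule relpowp_trans)
    qed
    have eqn: "Suc (a - p) + (b - q) = d - p - q" using ab d1 pa qb by linarith
    have walk: "(E ^^ (d - p - q)) x' y'" using w0 by (simp only: eqn)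
    have neq: "x' \<noteq> y'"
    proof
      assume "x' = y'"
      then have "(E ^^ q) x' v" using Ensym[OF DEn[OF y1]] by simp
      then have "(E ^^ (p + q)) u v" using relpowp_trans[OF DEn[OF x1]] by blast
      moreover have "p + q < d" using ab d1 pa qb by linarith
      ultimately show False using dmin by blast
    qed
    have "graph_power E k x' y'" unfolding graph_power_def using neq walk short by blast
    then show "\<exists>a b. a + b = l - 1 \<and> (\<exists>x\<in>out_ball (graph_power D k) u a.
                 \<exists>y\<in>out_ball (graph_power D k) v b. graph_power E k x y)"
      using x'b y'b ab' by blast
  qed
qed

end
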